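(* Let $\mathscr X\in\mathbb R^{I_1\times\cdots\times I_N}$ be a nonzero tensor, fix $n$ with $1\leq n\leq N$, and set $R=\operatorname{rank}(\mathbf X_{(n)})$. Let $j_1<\cdots<j_R$ be the indices of $R$ linearly independent rows of $\mathbf X_{(n)}$, and define $\mathbf A\in\mathbb R^{R\times I_n}$ by $a_{st}=1$ if $t=j_s$ and $a_{st}=0$ otherwise. Set $\mathscr Y=\mathscr X\times_n\mathbf A$. Then $\mathscr Y$ is a subtensor of $\mathscr X$, and $\operatorname{rank}(\mathbf Y_{(m)})=\operatorname{rank}(\mathbf X_{(m)})$ for every $m$ with $1\leq m\leq N$.
   Context: All tensors are real. For $\mathscr X\in\mathbb R^{I_1\times\cdots\times I_N}$, the mode-$n$ unfolding $\mathbf X_{(n)}\in\mathbb R^{I_n\times (\prod_{k\neq n}I_k)}$ is the matrix whose rows are indexed by $i_n$ and whose columns are exactly the vectors $(x_{i_1\cdots i_N})_{i_n=1}^{I_n}$ obtained by fixing all indices other than $i_n$ (in a fixed standard order of the remaining indices). The mode-$n$ product of $\mathscr X$ with $\mathbf A\in\mathbb R^{J\times I_n}$ is the tensor $\mathscr X\times_n\mathbf A\in\mathbb R^{I_1\times\cdots\times I_{n-1}\times J\times I_{n+1}\times\cdots\times I_N}$ with entries $(\mathscr X\times_n\mathbf A)_{i_1\cdots i_{n-1}j i_{n+1}\cdots i_N}=\sum_{i_n=1}^{I_n}x_{i_1\cdots i_N}a_{j i_n}$. A subtensor of $\mathscr X$ is a tensor $\mathscr Y\in\mathbb R^{J_1\times\cdots\times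 J_N}$ with $1\le J_n\le I_n$ of the form $y_{j_1\cdots j_N}=x_{i_{1j_1}\cdots i_{Nj_N}}$ for some indices $1\leq i_{n1}<\cdots<i_{nJ_n}\leq I_n$, $1\le n\le N$. *)

theory Defs
  imports "Jordan_Normal_Form.DL_Rank"
begin

text \<open>A tensor in R^(I_1 x ... x I_N) is represented by its dimension list
  I :: nat list (N = length I) and an entry function X :: nat list => real, of which only
  the values at valid multi-indices matter. Indices and modes are 0-based:
  a valid multi-index is a list i with length i = N and i!k < I!k.\<close>

definition tensor_indices :: "nat list \<Rightarrow> nat list set" where
  "tensor_indices I = {i. length i = length I \<and> (\<forall>k<length I. i ! k < I ! k)}"

definition mat_rank :: "real mat \<Rightarrow> nat" where
  "mat_rank M = vec_space.rank (dim_row M) M"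

text \<open>Standard (Kolda-Bader) column ordering of the mode-n unfolding:
  the other indices i_k (k \<noteq> n) are combined in little-endian mixed radix.\<close>
definition col_stride :: "nat list \<Rightarrow> nat \<Rightarrow> nat \<Rightarrow> nat" where
  "col_stride I n k = (\<Prod>m\<in>{m. m < k \<and> m \<noteq> n}. I ! m)"

definition unfold_index :: "nat list \<Rightarrow> nat \<Rightarrow> nat \<Rightarrow> nat \<Rightarrow> nat list" where
  "unfold_index I n r c =
     map (\<lambda>k. if k = n then r else (c div col_stride I n k) mod (I ! k)) [0..<length I]"

definition mode_unfolding :: "nat list \<Rightarrow> nat \<Rightarrow> (nat list \<Rightarrow> real) \<Rightarrow> real mat" where
  "mode_unfolding I n X =
     mat (I ! n) (\<Prod>k\<in>{k. k < length I \<and> k \<noteq> n}. I ! k) (\<lambda>(r, c). X (unfold_index I n r c))"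

text \<open>Mode-n product X \<times>_n A for A of size J x I_n; result has dimensions I[n := J].\<close>
definition mode_product :: "nat list \<Rightarrow> nat \<Rightarrow> (nat list \<Rightarrow> real) \<Rightarrow> real mat \<Rightarrow> (nat list \<Rightarrow> real)" where
  "mode_product I n X A = (\<lambda>i. \<Sum>t<I ! n. X (i[n := t]) * A $$ (i ! n, t))"

definition is_subtensor :: "nat list \<Rightarrow> (nat list \<Rightarrow> real) \<Rightarrow> nat list \<Rightarrow> (nat list \<Rightarrow> real) \<Rightarrow> bool" where
  "is_subtensor I X J Y \<longleftrightarrow>
     length J = length I \<and> (\<forall>k<length I. 1 \<le> J ! k \<and> J ! k \<le> I ! k) \<and>
     (\<exists>idx :: nat \<Rightarrow> nat \<Rightarrow> nat.
        (\<forall>k<length I. (\<forall>a b. a < b \<and> b < J ! k \<longrightarrow> idx k a < idx k b) \<and>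
                      (\<forall>a<J ! k. idx k a < I ! k)) \<and>
        (\<forall>j\<in>tensor_indices J. Y j = X (map (\<lambda>k. idx k (j ! k)) [0..<length I])))"

end

theory Submission
  imports Defs
begin

lemma (in vec_space) rank_mono_span:
  assumes A: "A \<in> carrier_mat n nc" and B: "B \<in> carrier_mat n nc'"
    and sub: "set (cols A) \<subseteq> span (set (cols B))"
  shows "rank A \<le> rank B"
proof -
  have cB: "set (cols B) \<subseteq> carrier_vec n" using B cols_dim by blast
  have vs: "vectorspace class_ring (vs (span (set (cols B))))"
    using span_is_subspace[THEN subspace_is_vs, OF cB] by auto
  have sm: "submodule class_ring (span (set (cols B))) V" using cB by (simp add: span_is_submodule)
  have sub2: "subspace class_ring (span (set (cols A))) (vs (span (set (cols B))))"
    using vectorspace.span_is_subspace[OF vs, of "set (cols A)", unfolded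
    span_li_not_depend(1)[OF sub sm]] sub by auto
  have fin_dim:"vectorspace.fin_dim class_ring (vs (span (set (cols B))))"
       "vectorspace.fin_dim class_ring (vs (span (set (cols B)))\<lparr>carrier := span (set (cols A))\<rparr>)"
    using fin_dim_span_cols A B by auto
  show ?thesis unfolding rank_def using vectorspace.subspace_dim[OF vs sub2 fin_dim(1) fin_dim(2)] by simp
qed

lemma (in vec_space) rank_le_nr:
  assumes A: "A \<in> carrier_mat n nc"
  shows "rank A \<le> n"
proof -
  have cA: "set (cols A) \<subseteq> carrier_vec n" using A cols_dim by blast
  have "subspace class_ring (span (set (cols A))) V" using span_is_subspace[OF cA] by auto
  then show ?thesis unfolding rank_def
    using subspace_dim[OF _ fin_dim] fin_dim_span_cols[OF A] dim_is_n by fastforce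
qed

lemma (in vec_module) lincomb_list_index':
  assumes "set vs \<subseteq> carrier_vec n" and i: "i < n"
  shows "lincomb_list g vs $ i = (\<Sum>k<length vs. g k * vs ! k $ i)"
proof -
  have "\<forall>w\<in>set vs. dim_vec w = n" using assms by auto
  from lincomb_list_as_mat_mult[OF this, of g]
  have "lincomb_list g vs $ i = (mat_of_cols n vs *\<^sub>v vec (length vs) g) $ i" by simp
  also have "\<dots> = (\<Sum>k<length vs. mat_of_cols n vs $$ (i,k) * g k)"
    using i by (simp add: scalar_prod_def row_def lessThan_atLeast0)
  also have "\<dots> = (\<Sum>k<length vs. g k * vs ! k $ i)"
  proof (rule sum.cong)
    fix k assume "k \<in> {..<length vs}"
    then have k: "k < length vs" by simp
    have "mat_of_cols n vs $$ (i,k) = vs ! k $ i" using mat_of_cols_index[of i n k vs] i k by simp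
    then show "mat_of_cols n vs $$ (i,k) * g k = g k * vs ! k $ i" by simp
  qed simp
  finally show ?thesis .
qed

lemma rank_transpose_le:
  fixes A :: "'a::field mat"
  assumes A: "A \<in> carrier_mat n nc"
  shows "vec_space.rank nc (transpose_mat A) \<le> vec_space.rank n A"
proof -
  interpret N: vec_space "TYPE('a)" n .
  interpret C: vec_space "TYPE('a)" nc .
  obtain S where maxS: "maximal S (\<lambda>T. T \<subseteq> set (cols A) \<and> N.lin_indpt T)"
    using maximal_exists[of "(\<lambda>T. T \<subseteq> set (cols A) \<and> N.lin_indpt T)" "card (set (cols A))" "{}"]
  proof -
    have li0: "N.lin_indpt {}" unfolding N.lin_dep_def by auto
    have "\<exists>S. finite S \<and> maximal S (\<lambda>T. T \<subseteq> set (cols A) \<and> N.lin_indpt T)"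
    proof (rule maximal_exists[where N="card (set (cols A))" and B="{}"])
      fix T assume "T \<subseteq> set (cols A) \<and> N.lin_indpt T"
      then show "finite T \<and> card T \<le> card (set (cols A))"
        using finite_subset card_mono by (metis List.finite_set)
    qed (use li0 in auto)
    then show ?thesis using that by blast
  qed
  have rk: "N.rank A = card S" by (rule N.rank_card_indpt[OF A maxS])
  have Ssub: "S \<subseteq> set (cols A)" and Sli: "N.lin_indpt S" using maxS unfolding maximal_def by auto
  have cA: "set (cols A) \<subseteq> carrier_vec n" using A cols_dim by blast
  have finS: "finite S" using Ssub finite_subset by blast
  obtain bs where bs: "set bs = S" "distinct bs" using finite_distinct_list[OF finS] by blast
  define r where "r = length bs"
  have r: "r = card S" using bs distinct_card r_def by metis
  have bsC: "set bs \<subseteq> carrier_vec n" using bs Ssub cA by auto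
  have spanc: "col A c \<in> N.span (set bs)" if c: "c < nc" for c
  proof (rule ccontr)
    assume nin: "col A c \<notin> N.span (set bs)"
    have vC: "col A c \<in> carrier_vec n" using A c by auto
    have vS: "col A c \<notin> S" using nin N.in_own_span[of S] Ssub cA bs by auto
    have "\<not> N.lin_dep (S \<union> {col A c})"
      using N.lin_dep_iff_in_span[of S "col A c"] Ssub cA Sli vC vS nin bs by auto
    moreover have "S \<union> {col A c} \<subseteq> set (cols A)" using Ssub A c by (auto simp: cols_def)
    ultimately have "S \<union> {col A c} \<subseteq> set (cols A) \<and> N.lin_indpt (S \<union> {col A c})" by simp
    moreover have "S \<subseteq> S \<union> {col A c}" by auto
    ultimately have "S \<union> {col A c} = S" using maxS unfolding maximal_def by metis
    then show False using vS by auto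
  qed
  have "\<forall>c. \<exists>g. c < nc \<longrightarrow> col A c = N.lincomb_list g bs"
  proof (intro allI)
    fix c show "\<exists>g. c < nc \<longrightarrow> col A c = N.lincomb_list g bs"
    proof (cases "c < nc")
      case True
      then have "col A c \<in> N.span_list bs" using spanc N.span_list_as_span[OF bsC] by auto
      then obtain g where "col A c = N.lincomb_list g bs" by (rule N.in_span_listE)
      then show ?thesis by blast
    qed auto
  qed
  then obtain f where f: "\<And>c. c < nc \<Longrightarrow> col A c = N.lincomb_list (f c) bs" by metis
  have ent: "A $$ (i,c) = (\<Sum>k<r. f c k * bs!k $ i)" if i: "i < n" and c: "c < nc" for i c
  proof -
    have "A $$ (i,c) = col A c $ i" using A i c by auto
    also have "\<dots> = (mat_of_cols n bs *\<^sub>v vec r (f c)) $ i"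
    proof -
      have "\<forall>w\<in>set bs. dim_vec w = n" using bsC by auto
      from N.lincomb_list_as_mat_mult[OF this, of "f c"] show ?thesis
        using f[OF c] unfolding r_def by simp
    qed
    also have "\<dots> = (\<Sum>k<r. mat_of_cols n bs $$ (i,k) * f c k)"
      using i r_def by (simp add: scalar_prod_def row_def lessThan_atLeast0)
    also have "\<dots> = (\<Sum>k<r. f c k * bs!k $ i)"
    proof (rule sum.cong)
      fix k assume "k \<in> {..<r}"
      then have k: "k < r" by simp
      have "mat_of_cols n bs $$ (i,k) = bs ! k $ i" using mat_of_cols_index[of i n k bs] i k r_def by simp
      then show "mat_of_cols n bs $$ (i,k) * f c k = f c k * bs ! k $ i" by simp
    qed simp
    finally show ?thesis .
  qed
  define ws where "ws = map (\<lambda>k. vec nc (\<lambda>c. f c k)) [0..<r]"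
  have wsC: "set ws \<subseteq> carrier_vec nc" unfolding ws_def by auto
  have "set (cols (transpose_mat A)) \<subseteq> C.span (set ws)"
  proof
    fix v assume "v \<in> set (cols (transpose_mat A))"
    then have "v \<in> set (rows A)" by simp
    then obtain i where i: "i < n" and v: "v = row A i" using A unfolding rows_def by auto
    have wsd: "\<forall>w\<in>set ws. dim_vec w = nc" using wsC by auto
    have lws: "length ws = r" unfolding ws_def by simp
    have "v = C.lincomb_list (\<lambda>k. bs!k $ i) ws"
    proof -
      have "C.lincomb_list (\<lambda>k. bs!k $ i) ws = mat_of_cols nc ws *\<^sub>v vec r (\<lambda>k. bs!k $ i)"
        using C.lincomb_list_as_mat_mult[OF wsd] lws by simp
      also have "\<dots> = v"
      proof (rule eq_vecI)
        show "dim_vec (mat_of_cols nc ws *\<^sub>v vec r (\<lambda>k. bs ! k $ i)) = dim_vec v" using v A by simp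
        fix c assume "c < dim_vec v"
        then have c: "c < nc" using v A by simp
        have "(mat_of_cols nc ws *\<^sub>v vec r (\<lambda>k. bs ! k $ i)) $ c
            = (\<Sum>k<r. mat_of_cols nc ws $$ (c,k) * bs ! k $ i)"
          using c lws by (simp add: scalar_prod_def row_def lessThan_atLeast0)
        also have "\<dots> = (\<Sum>k<r. f c k * bs ! k $ i)"
        proof (rule sum.cong)
          fix k assume "k \<in> {..<r}"
          then have k: "k < r" by simp
          have "mat_of_cols nc ws $$ (c,k) = ws ! k $ c" using mat_of_cols_index[of c nc k ws] c k lws by simp
          also have "\<dots> = f c k" unfolding ws_def using k c by simp
          finally show "mat_of_cols nc ws $$ (c,k) * bs ! k $ i = f c k * bs ! k $ i" by simp
        qed simp
        also have "\<dots> = A $$ (i, c)" using ent[OF i c] by simp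
        also have "\<dots> = v $ c" using v A i c by simp
        finally show "(mat_of_cols nc ws *\<^sub>v vec r (\<lambda>k. bs ! k $ i)) $ c = v $ c" .
      qed
      finally show ?thesis by simp
    qed
    then have "v \<in> C.span_list ws" by (intro C.in_span_listI[where c="\<lambda>k. bs!k $ i"]) auto
    then show "v \<in> C.span (set ws)" using C.span_list_as_span[OF wsC] by simp
  qed
  then have "C.rank (transpose_mat A) \<le> C.rank (mat_of_cols nc ws)"
    by (intro C.rank_mono_span[of "transpose_mat A" n "mat_of_cols nc ws" "length ws"]) (use A wsC in auto)
  also have "\<dots> \<le> r"
  proof -
    have "mat_of_cols nc ws \<in> carrier_mat nc r" unfolding ws_def
      by (metis length_map length_upt minus_nat.diff_0 mat_of_cols_carrier(1))
    then show ?thesis by (rule C.rank_le_nc)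
  qed
  finally show ?thesis using rk r by simp
qed

lemma rank_transpose:
  fixes A :: "'a::field mat"
  assumes A: "A \<in> carrier_mat n nc"
  shows "vec_space.rank nc (transpose_mat A) = vec_space.rank n A"
  using rank_transpose_le[OF A] rank_transpose_le[of "transpose_mat A" nc n] A by auto


lemma mixed_radix_surj:
  fixes K :: "nat set" and D d :: "nat \<Rightarrow> nat"
  assumes "finite K"
  shows "(\<forall>k\<in>K. 0 < D k) \<longrightarrow> (\<forall>k\<in>K. d k < D k) \<longrightarrow>
    (\<exists>c < (\<Prod>k\<in>K. D k). \<forall>k\<in>K. (c div (\<Prod>l\<in>{l\<in>K. l<k}. D l)) mod D k = d k)"
  using assms
proof (induction K rule: finite_linorder_max_induct)
  case empty
  then show ?case by auto
next
  case (insert b K)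
  show ?case
  proof (intro impI)
    assume pos: "\<forall>k\<in>insert b K. 0 < D k" and dl: "\<forall>k\<in>insert b K. d k < D k"
    from insert.IH pos dl obtain c where c: "c < (\<Prod>k\<in>K. D k)"
      and cK: "\<forall>k\<in>K. (c div (\<Prod>l\<in>{l\<in>K. l<k}. D l)) mod D k = d k" by auto
    define P where "P = (\<Prod>k\<in>K. D k)"
    have bK: "b \<notin> K" using insert.hyps by auto
    have Ppos: "0 < P" unfolding P_def using pos by (simp add: prod_pos)
    define c' where "c' = c + P * d b"
    have "c' < P * (d b + 1)" unfolding c'_def using c P_def by simp
    also have "\<dots> \<le> P * D b" using dl by (intro mult_le_mono2) auto
    finally have c'lt: "c' < (\<Prod>k\<in>insert b K. D k)"
      using bK insert.hyps(1) by (simp add: P_def mult.commute)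
    have "(c' div (\<Prod>l\<in>{l\<in>insert b K. l<k}. D l)) mod D k = d k" if k: "k \<in> insert b K" for k
    proof (cases "k = b")
      case True
      have "{l\<in>insert b K. l<k} = K" using True insert.hyps by auto
      then have "(\<Prod>l\<in>{l\<in>insert b K. l<k}. D l) = P" unfolding P_def by simp
      moreover have "c' div P = d b" unfolding c'_def using c P_def Ppos by simp
      ultimately show ?thesis using True dl by simp
    next
      case False
      then have kK: "k \<in> K" using k by simp
      then have kb: "k < b" using insert.hyps by auto
      have eqset: "{l\<in>insert b K. l<k} = {l\<in>K. l<k}" using kb by auto
      define s where "s = (\<Prod>l\<in>{l\<in>K. l<k}. D l)"
      have spos: "0 < s" unfolding s_def using pos by (simp add: prod_pos)
      have "(\<Prod>l\<in>{l\<in>K. l\<le>k}. D l) = s * D k"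
      proof -
        have "{l\<in>K. l\<le>k} = insert k {l\<in>K. l<k}" using kK by auto
        then show ?thesis unfolding s_def using insert.hyps(1) by (simp add: mult.commute)
      qed
      moreover have "(\<Prod>l\<in>{l\<in>K. l\<le>k}. D l) dvd P"
        unfolding P_def by (rule prod_dvd_prod_subset, use insert.hyps(1) in auto)
      ultimately obtain q where q: "P = s * D k * q" by (metis dvdE)
      have "c' div s = c div s + D k * (q * d b)"
    proof -
      have "c' = c + s * (D k * (q * d b))" unfolding c'_def q by (simp add: algebra_simps)
      then show ?thesis using spos by simp
    qed
      then have "(c' div s) mod D k = (c div s) mod D k" by simp
      then show ?thesis using cK kK eqset s_def by simp
    qed
    then show "\<exists>c < (\<Prod>k\<in>insert b K. D k). \<forall>k\<in>insert b K.
        (c div (\<Prod>l\<in>{l\<in>insert b K. l<k}. D l)) mod D k = d k"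
      using c'lt by blast
  qed
qed

lemma unfold_index_surj:
  assumes pos: "\<forall>k<length I. 0 < I ! k" and m: "m < length I" and i: "i \<in> tensor_indices I"
  shows "\<exists>c < (\<Prod>k\<in>{k. k < length I \<and> k \<noteq> m}. I ! k). \<forall>r. unfold_index I m r c = i[m := r]"
proof -
  define K where "K = {k. k < length I \<and> k \<noteq> m}"
  have fin: "finite K" unfolding K_def by simp
  have il: "length i = length I" "\<forall>k<length I. i ! k < I ! k" using i unfolding tensor_indices_def by auto
  from mixed_radix_surj[OF fin, of "\<lambda>k. I ! k" "\<lambda>k. i ! k"] pos il
  obtain c where c: "c < (\<Prod>k\<in>K. I ! k)"
    and cK: "\<forall>k\<in>K. (c div (\<Prod>l\<in>{l\<in>K. l<k}. I ! l)) mod I ! k = i ! k"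
    unfolding K_def by auto
  have "unfold_index I m r c = i[m := r]" for r
  proof (rule nth_equalityI)
    show "length (unfold_index I m r c) = length (i[m := r])" using il by (simp add: unfold_index_def)
    fix k assume "k < length (unfold_index I m r c)"
    then have k: "k < length I" by (simp add: unfold_index_def)
    show "unfold_index I m r c ! k = i[m := r] ! k"
    proof (cases "k = m")
      case True then show ?thesis using k il by (simp add: unfold_index_def)
    next
      case False
      have "{l\<in>K. l<k} = {l. l < k \<and> l \<noteq> m}" unfolding K_def using k by auto
      then have "col_stride I m k = (\<Prod>l\<in>{l\<in>K. l<k}. I ! l)" unfolding col_stride_def by simp
      then show ?thesis using False k cK unfolding K_def by (simp add: unfold_index_def)
    qed
  qed
  then show ?thesis using c unfolding K_def by blast
qed

lemma unfold_index_valid: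
  assumes pos: "\<forall>k<length I. 0 < I ! k" and r: "r < I ! m"
  shows "unfold_index I m r c \<in> tensor_indices I"
  using pos r unfolding tensor_indices_def unfold_index_def by auto

lemma unfold_index_upd: "m < length I \<Longrightarrow> unfold_index I m r c = (unfold_index I m 0 c)[m := r]"
  by (rule nth_equalityI) (auto simp: unfold_index_def)

lemma dims_unfolding[simp]:
  "dim_row (mode_unfolding I m Z) = I ! m"
  "dim_col (mode_unfolding I m Z) = (\<Prod>k\<in>{k. k < length I \<and> k \<noteq> m}. I ! k)"
  by (simp_all add: mode_unfolding_def)

lemma col_unfolding:
  assumes "c < (\<Prod>k\<in>{k. k < length I \<and> k \<noteq> m}. I ! k)"
  shows "col (mode_unfolding I m Z) c = vec (I ! m) (\<lambda>r. Z (unfold_index I m r c))"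
  unfolding mode_unfolding_def using assms by (simp add: col_mat)

lemma entry_unfolding:
  assumes "r < I ! m" "c < (\<Prod>k\<in>{k. k < length I \<and> k \<noteq> m}. I ! k)"
  shows "mode_unfolding I m Z $$ (r, c) = Z (unfold_index I m r c)"
  unfolding mode_unfolding_def using assms by simp

lemma cols_unfolding:
  assumes pos: "\<forall>k<length I. 0 < I ! k" and m: "m < length I"
  shows "set (cols (mode_unfolding I m Z)) = (\<lambda>i. vec (I ! m) (\<lambda>r. Z (i[m := r]))) ` tensor_indices I"
proof
  show "set (cols (mode_unfolding I m Z)) \<subseteq> (\<lambda>i. vec (I ! m) (\<lambda>r. Z (i[m := r]))) ` tensor_indices I"
  proof
    fix v assume "v \<in> set (cols (mode_unfolding I m Z))"
    then obtain c where c0: "c < length (cols (mode_unfolding I m Z))"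
      and v0: "v = cols (mode_unfolding I m Z) ! c" by (metis in_set_conv_nth)
    have c: "c < (\<Prod>k\<in>{k. k < length I \<and> k \<noteq> m}. I ! k)" using c0 cols_length dims_unfolding(2) by metis
    have v: "v = col (mode_unfolding I m Z) c" using v0 c0 cols_nth cols_length by metis
    define j where "j = unfold_index I m 0 c"
    have jr: "\<forall>r. unfold_index I m r c = j[m := r]" unfolding j_def using unfold_index_upd[OF m] by blast
    have v2: "v = vec (I ! m) (\<lambda>r. Z (j[m := r]))"
      using v col_unfolding[OF c] jr by simp
    have "j \<in> tensor_indices I" unfolding j_def
      by (rule unfold_index_valid[OF pos], use pos m in auto)
    then show "v \<in> (\<lambda>i. vec (I ! m) (\<lambda>r. Z (i[m := r]))) ` tensor_indices I" using v2 by blast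
  qed
next
  show "(\<lambda>i. vec (I ! m) (\<lambda>r. Z (i[m := r]))) ` tensor_indices I \<subseteq> set (cols (mode_unfolding I m Z))"
  proof
    fix v assume "v \<in> (\<lambda>i. vec (I ! m) (\<lambda>r. Z (i[m := r]))) ` tensor_indices I"
    then obtain i where i: "i \<in> tensor_indices I" and v: "v = vec (I ! m) (\<lambda>r. Z (i[m := r]))" by auto
    obtain c where c: "c < (\<Prod>k\<in>{k. k < length I \<and> k \<noteq> m}. I ! k)"
      and ce: "\<forall>r. unfold_index I m r c = i[m := r]" using unfold_index_surj[OF pos m i] by blast
    have "v = col (mode_unfolding I m Z) c" using v col_unfolding[OF c] ce by simp
    moreover have "c < dim_col (mode_unfolding I m Z)" using c by simp
    ultimately show "v \<in> set (cols (mode_unfolding I m Z))" unfolding cols_def by simp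
  qed
qed


lemma col_stride_upd: "col_stride (I[n := R]) n k = col_stride I n k"
  unfolding col_stride_def by (rule prod.cong) auto

lemma unfold_index_upd2:
  assumes "n < length I"
  shows "(unfold_index (I[n := R]) n s c)[n := t] = unfold_index I n t c"
  using assms by (intro nth_equalityI) (auto simp: unfold_index_def col_stride_upd)

theorem lemma3p4:
  fixes I :: "nat list" and X :: "nat list \<Rightarrow> real" and n :: nat and js :: "nat list"
  assumes dims_pos: "\<forall>k<length I. 0 < I ! k"
    and nonzero: "\<exists>i\<in>tensor_indices I. X i \<noteq> 0"
    and n_le: "n < length I"
    and len_js: "length js = mat_rank (mode_unfolding I n X)"
    and js_sorted: "sorted_wrt (<) js"
    and js_bound: "\<forall>s<length js. js ! s < I ! n"
    and js_indep:
      "distinct (map (row (mode_unfolding I n X)) js) \<and>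
       module.lin_indpt class_ring (module_vec TYPE(real) (dim_col (mode_unfolding I n X)))
         (set (map (row (mode_unfolding I n X)) js))"
  shows "let R = mat_rank (mode_unfolding I n X);
             A = mat R (I ! n) (\<lambda>(s, t). if t = js ! s then 1 else 0);
             Y = mode_product I n X A
         in is_subtensor I X (I[n := R]) Y \<and>
            (\<forall>m<length I. mat_rank (mode_unfolding (I[n := R]) m Y) = mat_rank (mode_unfolding I m X))"
proof -
  define M where "M = mode_unfolding I n X"
  define R where "R = mat_rank M"
  define Jn where "Jn = I ! n"
  define P where "P = (\<Prod>k\<in>{k. k < length I \<and> k \<noteq> n}. I ! k)"
  define A where "A = mat R (I ! n) (\<lambda>(s, t). if t = js ! s then (1::real) else 0)"
  define Y where "Y = mode_product I n X A"
  define I' where "I' = I[n := R]"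
  have lenR: "length js = R" using len_js unfolding R_def M_def .
  have js_lt: "\<And>s. s < R \<Longrightarrow> js ! s < Jn" using js_bound lenR Jn_def by auto
  have Yval: "\<And>j. j ! n < R \<Longrightarrow> Y j = X (j[n := js ! (j ! n)])"
  proof -
    fix j assume jn: "j ! n < R"
    have "Y j = (\<Sum>t<Jn. X (j[n := t]) * A $$ (j ! n, t))"
      unfolding Y_def mode_product_def Jn_def by simp
    also have "\<dots> = (\<Sum>t<Jn. if t = js ! (j ! n) then X (j[n := t]) else 0)"
      by (rule sum.cong, simp, use jn in \<open>simp add: A_def Jn_def\<close>)
    also have "\<dots> = X (j[n := js ! (j ! n)])" using js_lt[OF jn] by simp
    finally show "Y j = X (j[n := js ! (j ! n)])" .
  qed
  have dist_js: "distinct js" using js_sorted by (simp add: strict_sorted_iff)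
  have R_le: "R \<le> Jn"
  proof -
    have "set js \<subseteq> {..<Jn}" using js_lt lenR by (auto simp: in_set_conv_nth)
    then have "card (set js) \<le> Jn" using card_mono[of "{..<Jn}" "set js"] by simp
    then show ?thesis using distinct_card[OF dist_js] lenR by simp
  qed
  have MC: "M \<in> carrier_mat Jn P" unfolding M_def Jn_def P_def by (rule carrier_matI) (simp_all only: dims_unfolding)
  interpret VP: vec_space "TYPE(real)" P .
  have indep: "distinct (map (row M) js)" "VP.lin_indpt (set (map (row M) js))"
    using js_indep MC unfolding M_def by auto
  have dimM: "dim_row M = Jn" "dim_col M = P" using MC by auto
  have rowsC: "set (map (row M) js) \<subseteq> carrier_vec P" using dimM by auto
  have rankM: "vec_space.rank Jn M = R" unfolding R_def mat_rank_def using dimM by simp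
  have RS: "row M t \<in> VP.span (set (map (row M) js))" if t: "t < Jn" for t
  proof (rule ccontr)
    assume nin: "row M t \<notin> VP.span (set (map (row M) js))"
    have vC: "row M t \<in> carrier_vec P" using dimM unfolding carrier_vec_def by simp
    have vS: "row M t \<notin> set (map (row M) js)" using nin VP.in_own_span[OF rowsC] by auto
    have li: "\<not> VP.lin_dep (set (map (row M) js) \<union> {row M t})"
      using VP.lin_dep_iff_in_span[OF rowsC indep(2) vC vS] nin by simp
    have sub: "set (map (row M) js) \<union> {row M t} \<subseteq> set (cols (transpose_mat M))"
      using t js_lt lenR dimM by (auto simp: rows_def in_set_conv_nth)
    have MT: "transpose_mat M \<in> carrier_mat P Jn" using MC by simp
    have "card (set (map (row M) js) \<union> {row M t}) \<le> VP.rank (transpose_mat M)"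
      using VP.rank_ge_card_indpt[OF MT sub li] .
    also have "\<dots> = R" using rank_transpose[OF MC] rankM by simp
    finally have "card (set (map (row M) js) \<union> {row M t}) \<le> R" .
    moreover have "card (set (map (row M) js) \<union> {row M t}) = R + 1"
      using vS distinct_card[OF indep(1)] lenR by simp
    ultimately show False by simp
  qed
  have "\<forall>t. \<exists>g. t < Jn \<longrightarrow> row M t = VP.lincomb_list g (map (row M) js)"
  proof (intro allI)
    fix t show "\<exists>g. t < Jn \<longrightarrow> row M t = VP.lincomb_list g (map (row M) js)"
    proof (cases "t < Jn")
      case True
      then have "row M t \<in> VP.span_list (map (row M) js)" using RS VP.span_list_as_span[OF rowsC] by auto
      then obtain g where "row M t = VP.lincomb_list g (map (row M) js)" by (rule VP.in_span_listE)
      then show ?thesis by blast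
    qed auto
  qed
  then obtain B where B: "\<And>t. t < Jn \<Longrightarrow> row M t = VP.lincomb_list (B t) (map (row M) js)" by metis
  have MB: "M $$ (t, c) = (\<Sum>s<R. B t s * M $$ (js ! s, c))" if t: "t < Jn" and c: "c < P" for t c
  proof -
    have "M $$ (t, c) = row M t $ c" using t c dimM by simp
    also have "\<dots> = (\<Sum>s<R. B t s * map (row M) js ! s $ c)"
      using B[OF t] VP.lincomb_list_index'[OF rowsC c, of "B t"] lenR by simp
    also have "\<dots> = (\<Sum>s<R. B t s * M $$ (js ! s, c))"
      by (rule sum.cong, simp, use js_lt lenR c dimM in simp)
    finally show ?thesis .
  qed
  have XB: "X i = (\<Sum>s<R. B (i ! n) s * X (i[n := js ! s]))" if i: "i \<in> tensor_indices I" for i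
  proof -
    obtain c where c: "c < P" and ce: "\<forall>r. unfold_index I n r c = i[n := r]"
      using unfold_index_surj[OF dims_pos n_le i] unfolding P_def by blast
    have il: "length i = length I" "i ! n < Jn" using i n_le unfolding tensor_indices_def Jn_def by auto
    have "X i = M $$ (i ! n, c)"
      unfolding M_def using entry_unfolding[of "i ! n" I n c X] il c ce unfolding P_def Jn_def by simp
    also have "\<dots> = (\<Sum>s<R. B (i ! n) s * M $$ (js ! s, c))" using MB[OF il(2) c] .
    also have "\<dots> = (\<Sum>s<R. B (i ! n) s * X (i[n := js ! s]))"
      by (rule sum.cong, simp, use js_lt c ce in \<open>simp add: M_def entry_unfolding[of _ I n c X, folded P_def Jn_def]\<close>)
    finally show ?thesis .
  qed
  have Rpos: "0 < R"
  proof (rule ccontr)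
    assume "\<not> 0 < R"
    then have "R = 0" by simp
    obtain i where "i \<in> tensor_indices I" "X i \<noteq> 0" using nonzero by blast
    then show False using XB \<open>R = 0\<close> by simp
  qed
  have lenI': "length I' = length I" unfolding I'_def by simp
  have I'n: "I' ! n = R" unfolding I'_def using n_le by simp
  have I'k: "\<And>k. k \<noteq> n \<Longrightarrow> I' ! k = I ! k" unfolding I'_def by simp
  have pos': "\<forall>k<length I'. 0 < I' ! k" using dims_pos Rpos I'n I'k lenI' by (metis)
  have sub: "is_subtensor I X I' Y"
    unfolding is_subtensor_def
  proof (intro conjI exI[of _ "\<lambda>k a. if k = n then js ! a else a"])
    show "length I' = length I" by (rule lenI')
    show "\<forall>k<length I. 1 \<le> I' ! k \<and> I' ! k \<le> I ! k"
      using I'n I'k Rpos R_le dims_pos Jn_def by (metis One_nat_def Suc_leI order_refl)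
    show "\<forall>k<length I. (\<forall>a b. a < b \<and> b < I' ! k \<longrightarrow>
        (if k = n then js ! a else a) < (if k = n then js ! b else b)) \<and>
        (\<forall>a<I' ! k. (if k = n then js ! a else a) < I ! k)"
      using I'n I'k js_lt Jn_def lenR js_sorted by (auto simp: sorted_wrt_iff_nth_less)
    show "\<forall>j\<in>tensor_indices I'. Y j = X (map (\<lambda>k. (if k = n then js ! (j ! k) else j ! k)) [0..<length I])"
    proof
      fix j assume j: "j \<in> tensor_indices I'"
      then have jl: "length j = length I" "j ! n < R" using lenI' I'n n_le unfolding tensor_indices_def by auto
      have "map (\<lambda>k. (if k = n then js ! (j ! k) else j ! k)) [0..<length I] = j[n := js ! (j ! n)]"
        by (rule nth_equalityI) (use jl in auto)
      then show "Y j = X (map (\<lambda>k. (if k = n then js ! (j ! k) else j ! k)) [0..<length I])"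
        using Yval[OF jl(2)] by simp
    qed
  qed
  have ranks: "mat_rank (mode_unfolding I' m Y) = mat_rank (mode_unfolding I m X)" if m: "m < length I" for m
  proof (cases "m = n")
    case True
    define YN where "YN = mode_unfolding I' n Y"
    have P': "(\<Prod>k\<in>{k. k < length I' \<and> k \<noteq> n}. I' ! k) = P"
      unfolding P_def lenI' by (rule prod.cong) (auto simp: I'k)
    have YNe: "YN = mat R P (\<lambda>(s, c). M $$ (js ! s, c))"
    proof (rule eq_matI)
      show "dim_row YN = dim_row (mat R P (\<lambda>(s, c). M $$ (js ! s, c)))"
        unfolding YN_def by (simp only: dims_unfolding I'n dim_row_mat)
      show "dim_col YN = dim_col (mat R P (\<lambda>(s, c). M $$ (js ! s, c)))"
        unfolding YN_def by (simp only: dims_unfolding P' dim_col_mat)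
      fix s c assume s: "s < dim_row (mat R P (\<lambda>(s, c). M $$ (js ! s, c)))"
        and c: "c < dim_col (mat R P (\<lambda>(s, c). M $$ (js ! s, c)))"
      then have s: "s < R" and c: "c < P" by auto
      have "YN $$ (s, c) = Y (unfold_index I' n s c)"
        unfolding YN_def using entry_unfolding[of s I' n c Y] s c I'n P' by simp
      also have "\<dots> = X ((unfold_index I' n s c)[n := js ! s])"
      proof -
        have "unfold_index I' n s c ! n = s" using n_le lenI' by (simp add: unfold_index_def)
        then show ?thesis using Yval[of "unfold_index I' n s c"] s by simp
      qed
      also have "\<dots> = X (unfold_index I n (js ! s) c)"
        unfolding I'_def using unfold_index_upd2[OF n_le] by simp
      also have "\<dots> = M $$ (js ! s, c)"
        unfolding M_def using entry_unfolding[of "js ! s" I n c X] js_lt[OF s] c unfolding P_def Jn_def by simp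
      finally show "YN $$ (s, c) = mat R P (\<lambda>(s, c). M $$ (js ! s, c)) $$ (s, c)" using s c by simp
    qed
    have YNT: "transpose_mat YN \<in> carrier_mat P R" unfolding YNe by simp
    have colsT: "cols (transpose_mat YN) = map (row M) js"
    proof (rule nth_equalityI)
      show "length (cols (transpose_mat YN)) = length (map (row M) js)" using YNT lenR by simp
      fix s assume "s < length (cols (transpose_mat YN))"
      then have s: "s < R" using YNT by simp
      show "cols (transpose_mat YN) ! s = map (row M) js ! s"
        using s lenR js_lt dimM unfolding YNe by (auto intro!: eq_vecI)
    qed
    have "VP.rank (transpose_mat YN) = R"
      using VP.lin_indpt_full_rank[OF YNT] colsT indep by simp
    moreover have "VP.rank (transpose_mat YN) = vec_space.rank R YN"
      using rank_transpose[of YN R P] YNe by simp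
    moreover have "dim_row YN = R" unfolding YNe by simp
    ultimately have "mat_rank YN = R" unfolding mat_rank_def by simp
    then show ?thesis using True YN_def R_def M_def by simp
  next
    case False
    note mn = False
    interpret VM: vec_space "TYPE(real)" "I ! m" .
    define XM where "XM = mode_unfolding I m X"
    define YM where "YM = mode_unfolding I' m Y"
    have I'm: "I' ! m = I ! m" using I'k mn by simp
    have m': "m < length I'" using m lenI' by simp
    have XMC: "XM \<in> carrier_mat (I ! m) (dim_col XM)" unfolding XM_def
      by (rule carrier_matI) (simp_all only: dims_unfolding)
    have YMC: "YM \<in> carrier_mat (I ! m) (dim_col YM)" unfolding YM_def
      by (rule carrier_matI) (simp_all only: dims_unfolding I'm)
    have cX: "set (cols XM) = (\<lambda>i. vec (I ! m) (\<lambda>r. X (i[m := r]))) ` tensor_indices I"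
      unfolding XM_def by (rule cols_unfolding[OF dims_pos m])
    have cY: "set (cols YM) = (\<lambda>i. vec (I ! m) (\<lambda>r. Y (i[m := r]))) ` tensor_indices I'"
      unfolding YM_def using cols_unfolding[OF pos' m', of Y] I'm by simp
    have cXC: "set (cols XM) \<subseteq> carrier_vec (I ! m)" using cols_dim[of XM] XMC by (metis carrier_matD(1))
    have cYC: "set (cols YM) \<subseteq> carrier_vec (I ! m)" using cols_dim[of YM] YMC by (metis carrier_matD(1))
    have le1: "VM.rank YM \<le> VM.rank XM"
    proof (rule VM.rank_mono_span[OF YMC XMC])
      have "set (cols YM) \<subseteq> set (cols XM)"
      proof
        fix v assume "v \<in> set (cols YM)"
        then obtain j where j: "j \<in> tensor_indices I'" and v: "v = vec (I ! m) (\<lambda>r. Y (j[m := r]))"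
          using cY by auto
        have jl: "length j = length I" "j ! n < R" using j lenI' I'n n_le unfolding tensor_indices_def by auto
        define j' where "j' = j[n := js ! (j ! n)]"
        have j': "j' \<in> tensor_indices I"
          unfolding tensor_indices_def
        proof (intro CollectI conjI allI impI)
          show "length j' = length I" unfolding j'_def using jl by simp
          fix k assume k: "k < length I"
          show "j' ! k < I ! k"
          proof (cases "k = n")
            case True then show ?thesis unfolding j'_def using jl js_lt Jn_def n_le by simp
          next
            case False
            have "j ! k < I' ! k" using j k lenI' unfolding tensor_indices_def by auto
            then show ?thesis unfolding j'_def using False I'k by simp
          qed
        qed
        have "v = vec (I ! m) (\<lambda>r. X (j'[m := r]))"
          unfolding v j'_def
        proof (rule eq_vecI)
          fix r assume "r < dim_vec (vec (I ! m) (\<lambda>r. X (j[n := js ! (j ! n), m := r])))"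
          then have r: "r < I ! m" by simp
          have "Y (j[m := r]) = X (j[m := r, n := js ! (j ! n)])"
            using Yval[of "j[m := r]"] jl mn by simp
          also have "\<dots> = X (j[n := js ! (j ! n), m := r])" using mn by (simp add: list_update_swap)
          finally show "vec (I ! m) (\<lambda>r. Y (j[m := r])) $ r = vec (I ! m) (\<lambda>r. X (j[n := js ! (j ! n), m := r])) $ r"
            using r by simp
        qed simp
        then show "v \<in> set (cols XM)" using cX j' by auto
      qed
      then show "set (cols YM) \<subseteq> VM.span (set (cols XM))" using VM.in_own_span[OF cXC] by blast
    qed
    have le2: "VM.rank XM \<le> VM.rank YM"
    proof (rule VM.rank_mono_span[OF XMC YMC])
      show "set (cols XM) \<subseteq> VM.span (set (cols YM))"
      proof
        fix v assume "v \<in> set (cols XM)"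
        then obtain i where i: "i \<in> tensor_indices I" and v: "v = vec (I ! m) (\<lambda>r. X (i[m := r]))"
          using cX by auto
        have il: "length i = length I" "\<forall>k<length I. i ! k < I ! k" using i unfolding tensor_indices_def by auto
        define ws where "ws = map (\<lambda>s. vec (I ! m) (\<lambda>r. Y (i[n := s, m := r]))) [0..<R]"
        have wsY: "set ws \<subseteq> set (cols YM)"
        proof
          fix w assume "w \<in> set ws"
          then obtain s where s: "s < R" and w: "w = vec (I ! m) (\<lambda>r. Y (i[n := s, m := r]))"
            unfolding ws_def by auto
          have "i[n := s] \<in> tensor_indices I'"
            unfolding tensor_indices_def
          proof (intro CollectI conjI allI impI)
            show "length (i[n := s]) = length I'" using il lenI' by simp
            fix k assume k: "k < length I'"
            show "i[n := s] ! k < I' ! k"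
            proof (cases "k = n")
              case True then show ?thesis using s I'n il n_le by simp
            next
              case False then show ?thesis using il k lenI' I'k by simp
            qed
          qed
          then show "w \<in> set (cols YM)" using cY w by auto
        qed
        have wsC: "set ws \<subseteq> carrier_vec (I ! m)" using wsY cYC by auto
        have lws: "length ws = R" unfolding ws_def by simp
        have "v = VM.lincomb_list (B (i ! n)) ws"
        proof (rule eq_vecI)
          show "dim_vec v = dim_vec (VM.lincomb_list (B (i ! n)) ws)"
            using VM.lincomb_list_carrier[OF wsC, of "B (i ! n)"] v by simp
          fix r assume "r < dim_vec (VM.lincomb_list (B (i ! n)) ws)"
          then have r: "r < I ! m" using VM.lincomb_list_carrier[OF wsC, of "B (i ! n)"] by simp
          have ir: "i[m := r] \<in> tensor_indices I" using i r m unfolding tensor_indices_def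
            by (auto simp: nth_list_update)
          have "v $ r = X (i[m := r])" using v r by simp
          also have "\<dots> = (\<Sum>s<R. B (i ! n) s * X (i[m := r, n := js ! s]))"
            using XB[OF ir] mn by simp
          also have "\<dots> = (\<Sum>s<R. B (i ! n) s * ws ! s $ r)"
          proof (rule sum.cong)
            fix s assume "s \<in> {..<R}"
            then have s: "s < R" by simp
            have "ws ! s $ r = Y (i[n := s, m := r])" unfolding ws_def using s r by simp
            also have "\<dots> = X (i[n := s, m := r, n := js ! s])"
              using Yval[of "i[n := s, m := r]"] s mn il n_le by simp
            also have "\<dots> = X (i[m := r, n := js ! s])" using mn by (simp add: list_update_swap)
            finally show "B (i ! n) s * X (i[m := r, n := js ! s]) = B (i ! n) s * ws ! s $ r" by simp
          qed simp
          also have "\<dots> = VM.lincomb_list (B (i ! n)) ws $ r"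
            using VM.lincomb_list_index'[OF wsC r] lws by simp
          finally show "v $ r = VM.lincomb_list (B (i ! n)) ws $ r" .
        qed
        then have "v \<in> VM.span_list ws" by (intro VM.in_span_listI[where c="B (i ! n)"]) auto
        then have "v \<in> VM.span (set ws)" using VM.span_list_as_span[OF wsC] by simp
        then show "v \<in> VM.span (set (cols YM))" using VM.span_is_monotone[OF wsY] by blast
      qed
    qed
    have "mat_rank YM = VM.rank YM" unfolding mat_rank_def YM_def using I'm by simp
    moreover have "mat_rank XM = VM.rank XM" unfolding mat_rank_def XM_def by simp
    ultimately show ?thesis using le1 le2 XM_def YM_def by simp
  qed
  show ?thesis unfolding Let_def using sub ranks
    by (simp add: R_def[symmetric] M_def[symmetric] A_def[symmetric] Y_def[symmetric] I'_def[symmetric])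
qed

end
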